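(* If $T\in\mathcal{T}^*_3$ has root $v$ and $n$ vertices of which $k$ are not leaves, then $\lambda(T,v)\ge\frac{n+1}{2}+\frac{k-1}{10}$.
   Context: All trees are finite. $\mathcal{T}^*_3$ is the set of rooted trees in which the root has degree at least 2 and every other vertex of degree at least 2 has degree at least 3, together with the single-vertex rooted tree. Here leaves are the non-root vertices of degree 1; the root is counted among the $k$ non-leaf vertices. A subtree is a nonempty vertex set inducing a connected subgraph, and $\lambda(T,v)$ is the average number of vertices over all subtrees of $T$ containing $v$. *)

theory Defs
  imports Complex_Main
begin

definition simple_graph :: "'a set \<Rightarrow> 'a set set \<Rightarrow> bool" where
  "simple_graph V E \<longleftrightarrow> finite V \<and> (\<forall>e\<in>E. \<exists>x y. x \<in> V \<and> y \<in> V \<and> x \<noteq> y \<and> e = {x, y})"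

definition adj_in :: "'a set set \<Rightarrow> 'a set \<Rightarrow> ('a \<times> 'a) set" where
  "adj_in E S = {(x, y). x \<in> S \<and> y \<in> S \<and> {x, y} \<in> E}"

definition induces_connected :: "'a set set \<Rightarrow> 'a set \<Rightarrow> bool" where
  "induces_connected E S \<longleftrightarrow> S \<noteq> {} \<and> (\<forall>x\<in>S. \<forall>y\<in>S. (x, y) \<in> (adj_in E S)\<^sup>*)"

definition is_cycle :: "'a set set \<Rightarrow> 'a list \<Rightarrow> bool" where
  "is_cycle E cs \<longleftrightarrow> length cs \<ge> 3 \<and> distinct cs \<and>
     (\<forall>i < length cs - 1. {cs ! i, cs ! Suc i} \<in> E) \<and> {last cs, hd cs} \<in> E"

definition is_tree :: "'a set \<Rightarrow> 'a set set \<Rightarrow> bool" where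
  "is_tree V E \<longleftrightarrow> simple_graph V E \<and> induces_connected E V \<and>
     \<not> (\<exists>cs. set cs \<subseteq> V \<and> is_cycle E cs)"

definition degree :: "'a set set \<Rightarrow> 'a \<Rightarrow> nat" where
  "degree E v = card {e \<in> E. v \<in> e}"

definition leaves :: "'a set \<Rightarrow> 'a set set \<Rightarrow> 'a \<Rightarrow> 'a set" where
  "leaves V E r = {u \<in> V. u \<noteq> r \<and> degree E u = 1}"

definition in_T3star :: "'a set \<Rightarrow> 'a set set \<Rightarrow> 'a \<Rightarrow> bool" where
  "in_T3star V E r \<longleftrightarrow> is_tree V E \<and> r \<in> V \<and>
     (V = {r} \<or>
      (degree E r \<ge> 2 \<and> (\<forall>u \<in> V - {r}. degree E u \<ge> 2 \<longrightarrow> degree E u \<ge> 3)))"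

definition subtrees_containing :: "'a set \<Rightarrow> 'a set set \<Rightarrow> 'a \<Rightarrow> 'a set set" where
  "subtrees_containing V E v = {S. S \<subseteq> V \<and> v \<in> S \<and> induces_connected E S}"

definition local_mean :: "'a set \<Rightarrow> 'a set set \<Rightarrow> 'a \<Rightarrow> real" where
  "local_mean V E v =
     (\<Sum>S\<in>subtrees_containing V E v. real (card S)) / real (card (subtrees_containing V E v))"

end

theory Submission
  imports Defs
begin


lemma adj_in_sym: "(x,y) \<in> adj_in E S \<Longrightarrow> (y,x) \<in> adj_in E S"
  by (auto simp: adj_in_def insert_commute)

lemma rtrancl_adj_sym: "(x,y) \<in> (adj_in E S)\<^sup>* \<Longrightarrow> (y,x) \<in> (adj_in E S)\<^sup>*"
proof (induction rule: rtrancl_induct)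
  case base then show ?case by simp
next
  case (step y z) then show ?case by (meson adj_in_sym converse_rtrancl_into_rtrancl)
qed

lemma adj_in_mono: "S \<subseteq> T \<Longrightarrow> adj_in E S \<subseteq> adj_in E T" by (auto simp: adj_in_def)

lemma rtrancl_adj_mono: "S \<subseteq> T \<Longrightarrow> p \<in> (adj_in E S)\<^sup>* \<Longrightarrow> p \<in> (adj_in E T)\<^sup>*"
  using rtrancl_mono[OF adj_in_mono] by blast

lemma adj_in_restrict: "S \<subseteq> R \<Longrightarrow> adj_in {e\<in>E. e \<subseteq> R} S = adj_in E S"
  by (auto simp: adj_in_def)

lemma rtrancl_adj_in_snd: "(x,y) \<in> (adj_in E S)\<^sup>* \<Longrightarrow> x \<noteq> y \<Longrightarrow> y \<in> S"
  by (induction rule: rtrancl_induct) (auto simp: adj_in_def)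

lemma first_step: "(x,y) \<in> (adj_in E S)\<^sup>* \<Longrightarrow> x \<noteq> y \<Longrightarrow> \<exists>z. z \<in> S \<and> x \<in> S \<and> {x,z} \<in> E"
  by (erule converse_rtranclE) (auto simp: adj_in_def)

lemma conn_from_root:
  assumes "r \<in> S" "\<forall>x\<in>S. (r,x) \<in> (adj_in E S)\<^sup>*"
  shows "induces_connected E S"
  unfolding induces_connected_def
  using assms by (meson empty_iff rtrancl_adj_sym rtrancl_trans)

lemma conn_root: "induces_connected E S \<Longrightarrow> r \<in> S \<Longrightarrow> x \<in> S \<Longrightarrow> (r,x) \<in> (adj_in E S)\<^sup>*"
  unfolding induces_connected_def by blast

lemma conn_union:
  assumes "induces_connected E X" "induces_connected E Y" "r \<in> X" "c \<in> Y" "{r,c} \<in> E"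
  shows "induces_connected E (X \<union> Y)"
proof (rule conn_from_root[of r])
  show "r \<in> X \<union> Y" using assms by simp
  show "\<forall>x\<in>X \<union> Y. (r, x) \<in> (adj_in E (X \<union> Y))\<^sup>*"
  proof
    fix x assume "x \<in> X \<union> Y"
    then show "(r, x) \<in> (adj_in E (X \<union> Y))\<^sup>*"
    proof
      assume "x \<in> X"
      then show ?thesis using conn_root[OF assms(1) assms(3)] rtrancl_adj_mono[of X "X \<union> Y"] by blast
    next
      assume "x \<in> Y"
      then have "(c,x) \<in> (adj_in E (X \<union> Y))\<^sup>*" using conn_root[OF assms(2) assms(4)] rtrancl_adj_mono[of Y "X \<union> Y"] by blast
      moreover have "(r,c) \<in> adj_in E (X \<union> Y)" using assms by (auto simp: adj_in_def)
      ultimately show ?thesis by (meson converse_rtrancl_into_rtrancl)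
    qed
  qed
qed

fun epath :: "'a set set \<Rightarrow> 'a list \<Rightarrow> bool" where
  "epath E (x#y#xs) = ({x,y} \<in> E \<and> epath E (y#xs))"
| "epath E _ = True"

lemma epath_nth: "epath E xs \<Longrightarrow> i < length xs - 1 \<Longrightarrow> {xs!i, xs!Suc i} \<in> E"
proof (induction E xs arbitrary: i rule: epath.induct)
  case (1 E x y xs) then show ?case by (cases i) auto
qed auto

lemma epath_tl: "epath E xs \<Longrightarrow> epath E (tl xs)"
  by (induction E xs rule: epath.induct) auto

lemma epath_drop: "epath E xs \<Longrightarrow> epath E (drop n xs)"
  by (induction n arbitrary: xs) (auto simp: drop_Suc epath_tl)

lemma epath_Cons: "p \<noteq> [] \<Longrightarrow> epath E (x#p) = ({x,hd p}\<in>E \<and> epath E p)"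
  by (cases p) auto

lemma path_exists: "(x,y) \<in> (adj_in E W)\<^sup>* \<Longrightarrow> \<exists>p. p \<noteq> [] \<and> hd p = x \<and> last p = y \<and> distinct p \<and> set p \<subseteq> insert x W \<and> epath E p"
proof (induction rule: converse_rtrancl_induct)
  case base then show ?case by (intro exI[of _ "[y]"]) auto
next
  case (step x z)
  then obtain p where p: "p \<noteq> []" "hd p = z" "last p = y" "distinct p" "set p \<subseteq> insert z W" "epath E p" by blast
  from step.hyps(1) have xz: "x \<in> W" "z \<in> W" "{x,z} \<in> E" by (auto simp: adj_in_def)
  show ?case
  proof (cases "x \<in> set p")
    case True
    then obtain i where i: "i < length p" "p ! i = x" by (auto simp: in_set_conv_nth)
    let ?q = "drop i p"
    have "?q \<noteq> []" using i by simp
    moreover have "hd ?q = x" using i by (simp add: hd_drop_conv_nth)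
    moreover have "last ?q = y" using i p by simp
    moreover have "distinct ?q" using p by simp
    moreover have "set ?q \<subseteq> insert x W" using p xz set_drop_subset by fastforce
    moreover have "epath E ?q" using p epath_drop by blast
    ultimately show ?thesis by blast
  next
    case False
    have "epath E (x#p)" using p xz by (simp add: epath_Cons)
    then show ?thesis using p xz False by (intro exI[of _ "x#p"]) auto
  qed
qed




locale split =
  fixes V :: "'a set" and E :: "'a set set" and r c :: 'a
  assumes tree: "is_tree V E" and rV: "r \<in> V" and rc: "{r,c} \<in> E"
begin

definition B where "B = {y. (c,y) \<in> (adj_in E (V - {r}))\<^sup>*}"
definition R where "R = V - B"
definition ER where "ER = {e\<in>E. e \<subseteq> R}"
definition EB where "EB = {e\<in>E. e \<subseteq> B}"

lemma sg: "simple_graph V E" using tree by (simp add: is_tree_def)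
lemma finV: "finite V" using sg by (simp add: simple_graph_def)

lemma edge_mem: "{x,y} \<in> E \<Longrightarrow> x \<in> V \<and> y \<in> V \<and> x \<noteq> y"
proof -
  assume a: "{x,y} \<in> E"
  then obtain a b where "a \<in> V" "b \<in> V" "a \<noteq> b" "{x,y} = {a,b}" using sg unfolding simple_graph_def by blast
  then show ?thesis by (auto simp: doubleton_eq_iff)
qed

lemma edge_elem: "e \<in> E \<Longrightarrow> u \<in> e \<Longrightarrow> \<exists>w. e = {u,w} \<and> w \<in> V \<and> w \<noteq> u \<and> u \<in> V"
proof -
  assume a: "e \<in> E" "u \<in> e"
  then obtain x y where xy: "x \<in> V" "y \<in> V" "x \<noteq> y" "e = {x,y}" using sg unfolding simple_graph_def by blast
  show ?thesis
  proof (cases "u = x")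
    case True then show ?thesis using xy by blast
  next
    case False then have "u = y" using a xy by blast
    then show ?thesis using xy by (intro exI[of _ x]) auto
  qed
qed

lemma E_Pow: "E \<subseteq> Pow V"
proof
  fix e assume "e \<in> E"
  then obtain x y where "x \<in> V" "y \<in> V" "e = {x,y}" using sg unfolding simple_graph_def by blast
  then show "e \<in> Pow V" by auto
qed

lemma finE: "finite E" using finite_subset[OF E_Pow] finV by simp

lemma cV: "c \<in> V" "c \<noteq> r" using edge_mem[OF rc] by auto

lemma cB: "c \<in> B" by (simp add: B_def)

lemma B_sub: "B \<subseteq> V - {r}"
proof
  fix y assume "y \<in> B"
  then have "(c,y) \<in> (adj_in E (V - {r}))\<^sup>*" by (simp add: B_def)
  then show "y \<in> V - {r}" using cV rtrancl_adj_in_snd[of c y E "V - {r}"] by (cases "c = y") auto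
qed

lemma rB: "r \<notin> B" using B_sub by blast
lemma rR: "r \<in> R" using rB rV by (simp add: R_def)
lemma cR: "c \<notin> R" using cB by (simp add: R_def)
lemma R_sub: "R \<subseteq> V" by (auto simp: R_def)
lemma finR: "finite R" using finite_subset[OF R_sub] finV by simp
lemma finB: "finite B" using finite_subset[OF B_sub] finV by simp
lemma cardRB: "card R + card B = card V"
proof -
  have "V = R \<union> B" using B_sub by (auto simp: R_def)
  moreover have "R \<inter> B = {}" by (auto simp: R_def)
  ultimately show ?thesis using finR finB card_Un_disjoint by metis
qed
lemma RB_disj: "R \<inter> B = {}" by (auto simp: R_def)

lemma closure: "x \<in> B \<Longrightarrow> {x,w} \<in> E \<Longrightarrow> w \<noteq> r \<Longrightarrow> w \<in> B"
proof -
  assume a: "x \<in> B" "{x,w} \<in> E" "w \<noteq> r"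
  have "(x,w) \<in> adj_in E (V - {r})" using a B_sub edge_mem[OF a(2)] by (auto simp: adj_in_def)
  then show "w \<in> B" using a(1) by (simp add: B_def)
qed

lemma onlyedge: assumes "w \<in> B" "{r,w} \<in> E" shows "w = c"
proof (rule ccontr)
  assume wc: "w \<noteq> c"
  from assms(1) have cw: "(c,w) \<in> (adj_in E (V-{r}))\<^sup>*" by (simp add: B_def)
  obtain p where p: "p \<noteq> []" "hd p = c" "last p = w" "distinct p" "set p \<subseteq> insert c (V-{r})" "epath E p"
    using path_exists[OF cw] by blast
  have sp: "set p \<subseteq> V - {r}" using p cV by auto
  obtain a q where pq: "p = a # q" using p(1) by (cases p) auto
  have "q \<noteq> []" using pq p wc by auto
  then have len: "length p \<ge> 2" using pq by (cases q) auto
  let ?cs = "r # p"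
  have "is_cycle E ?cs"
    unfolding is_cycle_def
  proof (intro conjI)
    show "3 \<le> length ?cs" using len by simp
    show "distinct ?cs" using p sp by auto
    have "epath E ?cs" using p rc by (simp add: epath_Cons)
    then show "\<forall>i<length ?cs - 1. {?cs ! i, ?cs ! Suc i} \<in> E" using epath_nth by blast
    have "{w,r} = {r,w}" by blast
    then show "{last ?cs, hd ?cs} \<in> E" using p assms by simp
  qed
  moreover have "set ?cs \<subseteq> V" using sp rV by auto
  moreover have noc: "\<not>(\<exists>cs. set cs \<subseteq> V \<and> is_cycle E cs)" using tree by (simp add: is_tree_def)
  ultimately show False by blast
qed

lemma generic:
  assumes "W \<subseteq> V" "r \<in> W" "(r,y) \<in> (adj_in E W)\<^sup>*"
  shows "(y \<in> B \<longrightarrow> c \<in> W \<and> (c,y) \<in> (adj_in E (W \<inter> B))\<^sup>*) \<and> (y \<notin> B \<longrightarrow> (r,y) \<in> (adj_in E (W - B))\<^sup>*)"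
  using assms(3)
proof (induction rule: rtrancl_induct)
  case base then show ?case using rB by simp
next
  case (step y z)
  have yz: "y \<in> W" "z \<in> W" "{y,z} \<in> E" using step.hyps(2) by (auto simp: adj_in_def)
  show ?case
  proof (cases "y \<in> B")
    case yB: True
    show ?thesis
    proof (cases "z \<in> B")
      case True
      have "(y,z) \<in> adj_in E (W \<inter> B)" using yz yB True by (auto simp: adj_in_def)
      then show ?thesis using step.IH yB True by (meson rtrancl.rtrancl_into_rtrancl)
    next
      case False
      then have "z = r" using closure[OF yB yz(3)] by blast
      then show ?thesis using False by simp
    qed
  next
    case yB: False
    show ?thesis
    proof (cases "z \<in> B")
      case True
      have "y = r" using closure[OF True, of y] yz yB by (metis insert_commute)
      then have "z = c" using onlyedge[OF True] yz by simp
      then show ?thesis using yz cB by simp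
    next
      case False
      have "(y,z) \<in> adj_in E (W - B)" using yz yB False by (auto simp: adj_in_def)
      then show ?thesis using step.IH yB False by (meson rtrancl.rtrancl_into_rtrancl)
    qed
  qed
qed

lemma connV: "induces_connected E V" using tree by (simp add: is_tree_def)

lemma connR: "induces_connected E R"
proof (rule conn_from_root[OF rR], intro ballI)
  fix x assume "x \<in> R"
  then have "x \<in> V" "x \<notin> B" by (auto simp: R_def)
  then have "(r,x) \<in> (adj_in E (V - B))\<^sup>*" using generic[of V x] conn_root[OF connV rV] rV by blast
  then show "(r,x) \<in> (adj_in E R)\<^sup>*" unfolding R_def .
qed

lemma connB: "induces_connected E B"
proof (rule conn_from_root[OF cB], intro ballI)
  fix x assume "x \<in> B"
  then have "x \<in> V" using B_sub by auto
  have "V \<inter> B = B" using B_sub by blast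
  then show "(c,x) \<in> (adj_in E B)\<^sup>*" using generic[of V x] conn_root[OF connV rV] rV \<open>x \<in> B\<close> \<open>x \<in> V\<close>
    by simp
qed

lemma treeR: "is_tree R ER"
  unfolding is_tree_def
proof (intro conjI)
  show "simple_graph R ER" unfolding simple_graph_def
  proof (intro conjI ballI)
    show "finite R" using finR .
    fix e assume "e \<in> ER"
    then have e: "e \<in> E" "e \<subseteq> R" by (auto simp: ER_def)
    then obtain x y where "x \<noteq> y" "e = {x,y}" using sg unfolding simple_graph_def by blast
    then show "\<exists>x y. x \<in> R \<and> y \<in> R \<and> x \<noteq> y \<and> e = {x, y}" using e by blast
  qed
  show "induces_connected ER R" using connR by (simp add: ER_def induces_connected_def adj_in_restrict)
  show "\<not> (\<exists>cs. set cs \<subseteq> R \<and> is_cycle ER cs)"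
  proof
    assume "\<exists>cs. set cs \<subseteq> R \<and> is_cycle ER cs"
    then obtain cs where "set cs \<subseteq> R" "is_cycle ER cs" by blast
    then have c1: "set cs \<subseteq> V" using R_sub by blast
    have c2: "is_cycle E cs" using \<open>is_cycle ER cs\<close> unfolding is_cycle_def ER_def by auto
    have noc: "\<not>(\<exists>cs. set cs \<subseteq> V \<and> is_cycle E cs)" using tree by (simp add: is_tree_def)
    then show False using c1 c2 by blast
  qed
qed

lemma treeB: "is_tree B EB"
  unfolding is_tree_def
proof (intro conjI)
  show "simple_graph B EB" unfolding simple_graph_def
  proof (intro conjI ballI)
    show "finite B" using finB .
    fix e assume "e \<in> EB"
    then have e: "e \<in> E" "e \<subseteq> B" by (auto simp: EB_def)
    then obtain x y where "x \<noteq> y" "e = {x,y}" using sg unfolding simple_graph_def by blast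
    then show "\<exists>x y. x \<in> B \<and> y \<in> B \<and> x \<noteq> y \<and> e = {x, y}" using e by blast
  qed
  show "induces_connected EB B" using connB by (simp add: EB_def induces_connected_def adj_in_restrict)
  show "\<not> (\<exists>cs. set cs \<subseteq> B \<and> is_cycle EB cs)"
  proof
    assume "\<exists>cs. set cs \<subseteq> B \<and> is_cycle EB cs"
    then obtain cs where "set cs \<subseteq> B" "is_cycle EB cs" by blast
    then have c1: "set cs \<subseteq> V" using B_sub by blast
    have c2: "is_cycle E cs" using \<open>is_cycle EB cs\<close> unfolding is_cycle_def EB_def by auto
    have noc: "\<not>(\<exists>cs. set cs \<subseteq> V \<and> is_cycle E cs)" using tree by (simp add: is_tree_def)
    then show False using c1 c2 by blast
  qed
qed

lemma degR_r: "degree E r = Suc (degree ER r)"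
proof -
  have eq: "{e\<in>E. r\<in>e} = insert {r,c} {e\<in>ER. r\<in>e}"
  proof
    show "{e\<in>E. r\<in>e} \<subseteq> insert {r,c} {e\<in>ER. r\<in>e}"
    proof
      fix e assume e: "e \<in> {e\<in>E. r\<in>e}"
      then obtain w where w: "e = {r,w}" "w \<in> V" using edge_elem by blast
      show "e \<in> insert {r,c} {e\<in>ER. r\<in>e}"
      proof (cases "w \<in> B")
        case True then show ?thesis using onlyedge w e by auto
      next
        case False then show ?thesis using w e rR by (auto simp: ER_def R_def)
      qed
    qed
    show "insert {r,c} {e\<in>ER. r\<in>e} \<subseteq> {e\<in>E. r\<in>e}" using rc by (auto simp: ER_def)
  qed
  have "{r,c} \<notin> {e\<in>ER. r\<in>e}" using cR by (auto simp: ER_def)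
  moreover have "finite {e\<in>ER. r\<in>e}" using finE by (simp add: ER_def)
  ultimately show ?thesis unfolding degree_def eq by simp
qed

lemma degB_c: "degree E c = Suc (degree EB c)"
proof -
  have eq: "{e\<in>E. c\<in>e} = insert {r,c} {e\<in>EB. c\<in>e}"
  proof
    show "{e\<in>E. c\<in>e} \<subseteq> insert {r,c} {e\<in>EB. c\<in>e}"
    proof
      fix e assume e: "e \<in> {e\<in>E. c\<in>e}"
      then obtain w where w: "e = {c,w}" "w \<in> V" using edge_elem by blast
      show "e \<in> insert {r,c} {e\<in>EB. c\<in>e}"
      proof (cases "w = r")
        case True
        have "{c,r} = {r,c}" by blast
        then show ?thesis using w True by simp
      next
        case False then show ?thesis using w e closure[OF cB, of w] cB by (auto simp: EB_def)
      qed
    qed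
    show "insert {r,c} {e\<in>EB. c\<in>e} \<subseteq> {e\<in>E. c\<in>e}" using rc by (auto simp: EB_def)
  qed
  have "{r,c} \<notin> {e\<in>EB. c\<in>e}" using rB by (auto simp: EB_def)
  moreover have "finite {e\<in>EB. c\<in>e}" using finE by (simp add: EB_def)
  ultimately show ?thesis unfolding degree_def eq by simp
qed

lemma degR: "u \<in> R \<Longrightarrow> u \<noteq> r \<Longrightarrow> degree ER u = degree E u"
proof -
  assume u: "u \<in> R" "u \<noteq> r"
  have "{e\<in>ER. u\<in>e} = {e\<in>E. u\<in>e}"
  proof (auto simp: ER_def)
    fix e x assume e: "e \<in> E" "u \<in> e" "x \<in> e"
    then obtain w where w: "e = {u,w}" "w \<in> V" using edge_elem by blast
    have "w \<notin> B"
    proof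
      assume "w \<in> B"
      moreover have "{w,u} = e" using w by blast
      ultimately have "u \<in> B" using closure[of w u] e u by simp
      then show False using u by (simp add: R_def)
    qed
    then show "x \<in> R" using e w u by (auto simp: R_def)
  qed
  then show ?thesis by (simp add: degree_def)
qed

lemma degB: "u \<in> B \<Longrightarrow> u \<noteq> c \<Longrightarrow> degree EB u = degree E u"
proof -
  assume u: "u \<in> B" "u \<noteq> c"
  have "{e\<in>EB. u\<in>e} = {e\<in>E. u\<in>e}"
  proof (auto simp: EB_def)
    fix e x assume e: "e \<in> E" "u \<in> e" "x \<in> e"
    then obtain w where w: "e = {u,w}" "w \<in> V" using edge_elem by blast
    have "{u,w} = {w,u}" by blast
    then have "w \<noteq> r" using onlyedge[OF u(1)] u w e by auto
    then have "w \<in> B" using closure[OF u(1)] w e by simp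
    then show "x \<in> B" using e w u by auto
  qed
  then show ?thesis by (simp add: degree_def)
qed

lemma subR: "subtrees_containing R ER r = {S. S \<subseteq> R \<and> r \<in> S \<and> induces_connected E S}"
  by (auto simp: subtrees_containing_def ER_def induces_connected_def adj_in_restrict)

lemma subB: "subtrees_containing B EB c = {S. S \<subseteq> B \<and> c \<in> S \<and> induces_connected E S}"
  by (auto simp: subtrees_containing_def EB_def induces_connected_def adj_in_restrict)

lemma decomp: "subtrees_containing V E r =
   (\<lambda>(X,Y). X \<union> Y) ` (subtrees_containing R ER r \<times> insert {} (subtrees_containing B EB c))"
proof
  show "subtrees_containing V E r \<subseteq> (\<lambda>(X,Y). X \<union> Y) ` (subtrees_containing R ER r \<times> insert {} (subtrees_containing B EB c))"
  proof
    fix S assume S: "S \<in> subtrees_containing V E r"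
    then have S1: "S \<subseteq> V" "r \<in> S" "induces_connected E S" by (auto simp: subtrees_containing_def)
    have G: "\<And>y. y \<in> S \<Longrightarrow> (y \<in> B \<longrightarrow> c \<in> S \<and> (c,y) \<in> (adj_in E (S \<inter> B))\<^sup>*) \<and> (y \<notin> B \<longrightarrow> (r,y) \<in> (adj_in E (S - B))\<^sup>*)"
      using generic[OF S1(1) S1(2)] conn_root[OF S1(3) S1(2)] by blast
    have X: "S - B \<in> subtrees_containing R ER r"
      unfolding subR
    proof (intro CollectI conjI)
      show "S - B \<subseteq> R" using S1 by (auto simp: R_def)
      show "r \<in> S - B" using S1 rB by simp
      show "induces_connected E (S - B)" using G \<open>r \<in> S - B\<close> by (intro conn_from_root) auto
    qed
    have Y: "S \<inter> B \<in> insert {} (subtrees_containing B EB c)"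
    proof (cases "S \<inter> B = {}")
      case False
      then obtain y where "y \<in> S \<inter> B" by blast
      then have cS: "c \<in> S \<inter> B" using G cB by blast
      show ?thesis unfolding subB
        using G cS by (auto intro!: conn_from_root)
    qed simp
    have "S = (S - B) \<union> (S \<inter> B)" by blast
    then show "S \<in> (\<lambda>(X,Y). X \<union> Y) ` (subtrees_containing R ER r \<times> insert {} (subtrees_containing B EB c))"
      using X Y by (metis (no_types, lifting) SigmaI case_prod_conv image_eqI)
  qed
  show "(\<lambda>(X,Y). X \<union> Y) ` (subtrees_containing R ER r \<times> insert {} (subtrees_containing B EB c)) \<subseteq> subtrees_containing V E r"
  proof clarify
    fix X Y assume X: "X \<in> subtrees_containing R ER r" and Y: "Y \<in> insert {} (subtrees_containing B EB c)"
    from X have X1: "X \<subseteq> R" "r \<in> X" "induces_connected E X" unfolding subR by auto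
    show "X \<union> Y \<in> subtrees_containing V E r"
    proof (cases "Y = {}")
      case True then show ?thesis using X1 R_sub by (auto simp: subtrees_containing_def)
    next
      case False
      then have Y1: "Y \<subseteq> B" "c \<in> Y" "induces_connected E Y" using Y unfolding subB by auto
      have "induces_connected E (X \<union> Y)" using conn_union[OF X1(3) Y1(3) X1(2) Y1(2) rc] .
      then show ?thesis using X1 Y1 R_sub B_sub by (auto simp: subtrees_containing_def)
    qed
  qed
qed

lemma inj_dec: "inj_on (\<lambda>(X,Y). X \<union> Y) (subtrees_containing R ER r \<times> insert {} (subtrees_containing B EB c))"
proof (rule inj_onI)
  fix p q
  assume a: "p \<in> subtrees_containing R ER r \<times> insert {} (subtrees_containing B EB c)"
    "q \<in> subtrees_containing R ER r \<times> insert {} (subtrees_containing B EB c)"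
    "(\<lambda>(X,Y). X \<union> Y) p = (\<lambda>(X,Y). X \<union> Y) q"
  obtain X Y where p: "p = (X,Y)" by (cases p)
  obtain X' Y' where q: "q = (X',Y')" by (cases q)
  have "X \<subseteq> R" "X' \<subseteq> R" "Y \<subseteq> B" "Y' \<subseteq> B" using a(1,2) p q unfolding subR subB by auto
  moreover have "X \<union> Y = X' \<union> Y'" using a(3) p q by simp
  ultimately have "X = X'" "Y = Y'" using RB_disj by blast+
  then show "p = q" using p q by simp
qed

lemma leavesR: "u \<in> R \<Longrightarrow> u \<in> leaves V E r \<longleftrightarrow> u \<in> leaves R ER r"
  using degR R_sub by (auto simp: leaves_def)

lemma leavesB: "u \<in> B \<Longrightarrow> u \<noteq> c \<Longrightarrow> u \<in> leaves V E r \<longleftrightarrow> u \<in> leaves B EB c"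
  using degB B_sub by (auto simp: leaves_def)

lemma leaves_c: "c \<in> leaves V E r \<longleftrightarrow> degree EB c = 0"
  using degB_c cV by (auto simp: leaves_def)

lemma cLB: "c \<notin> leaves B EB c" by (simp add: leaves_def)

lemma nonleaf_eq1: "degree EB c = 0 \<Longrightarrow> V - leaves V E r = R - leaves R ER r \<union> (B - leaves B EB c - {c})"
  using leavesR leavesB leaves_c R_def B_sub by auto

lemma nonleaf_eq2: "degree EB c \<noteq> 0 \<Longrightarrow> V - leaves V E r = R - leaves R ER r \<union> (B - leaves B EB c)"
  using leavesR leavesB leaves_c cLB R_def B_sub by auto

end




context split begin

lemma fin_sub: "finite (subtrees_containing W F x)" if "finite W"
proof -
  have "subtrees_containing W F x \<subseteq> Pow W" by (auto simp: subtrees_containing_def)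
  then show ?thesis using that finite_subset by (metis finite_Pow_iff)
qed

lemma emptyB: "{} \<notin> subtrees_containing B EB c" by (simp add: subtrees_containing_def)

lemma countN: "card (subtrees_containing V E r) = card (subtrees_containing R ER r) * Suc (card (subtrees_containing B EB c))"
proof -
  have "card (subtrees_containing V E r) = card (subtrees_containing R ER r \<times> insert {} (subtrees_containing B EB c))"
    unfolding decomp using card_image[OF inj_dec] .
  also have "\<dots> = card (subtrees_containing R ER r) * card (insert {} (subtrees_containing B EB c))"
    by (rule card_cartesian_product)
  also have "card (insert {} (subtrees_containing B EB c)) = Suc (card (subtrees_containing B EB c))"
    using emptyB fin_sub[OF finB] by simp
  finally show ?thesis .
qed

lemma countS: "(\<Sum>X\<in>subtrees_containing V E r. real (card X)) =
   (\<Sum>X\<in>subtrees_containing R ER r. real (card X)) * (1 + real (card (subtrees_containing B EB c)))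
   + real (card (subtrees_containing R ER r)) * (\<Sum>X\<in>subtrees_containing B EB c. real (card X))"
proof -
  let ?AR = "subtrees_containing R ER r" and ?AB = "subtrees_containing B EB c"
  have fR: "finite ?AR" using fin_sub[OF finR] .
  have fB: "finite ?AB" using fin_sub[OF finB] .
  have sR: "\<And>X. X \<in> ?AR \<Longrightarrow> X \<subseteq> R" by (simp add: subtrees_containing_def)
  have sB: "\<And>Y. Y \<in> insert {} ?AB \<Longrightarrow> Y \<subseteq> B" by (auto simp: subtrees_containing_def)
  have "(\<Sum>X\<in>subtrees_containing V E r. real (card X)) = (\<Sum>p\<in>?AR \<times> insert {} ?AB. real (card ((\<lambda>(X,Y). X \<union> Y) p)))"
    unfolding decomp by (rule sum.reindex[OF inj_dec, unfolded comp_def])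
  also have "\<dots> = (\<Sum>p\<in>?AR \<times> insert {} ?AB. real (card (fst p)) + real (card (snd p)))"
  proof (rule sum.cong[OF refl])
    fix p assume p: "p \<in> ?AR \<times> insert {} ?AB"
    obtain X Y where XY: "p = (X,Y)" by (cases p)
    have "X \<subseteq> R" "Y \<subseteq> B" using p XY sR sB by auto
    then have "X \<inter> Y = {}" "finite X" "finite Y" using RB_disj finR finB finite_subset by blast+
    then show "real (card ((\<lambda>(X,Y). X \<union> Y) p)) = real (card (fst p)) + real (card (snd p))"
      using XY by (simp add: card_Un_disjoint)
  qed
  also have "\<dots> = (\<Sum>X\<in>?AR. \<Sum>Y\<in>insert {} ?AB. real (card X) + real (card Y))"
    by (simp add: sum.cartesian_product case_prod_beta)
  also have "\<dots> = (\<Sum>X\<in>?AR. real (card X) * (1 + real (card ?AB)) + (\<Sum>Y\<in>?AB. real (card Y)))"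
  proof (rule sum.cong[OF refl])
    fix X
    have "(\<Sum>Y\<in>insert {} ?AB. real (card X) + real (card Y)) = real (card X) + (\<Sum>Y\<in>?AB. real (card X) + real (card Y))"
      using emptyB fB by simp
    also have "\<dots> = real (card X) * (1 + real (card ?AB)) + (\<Sum>Y\<in>?AB. real (card Y))"
      by (simp add: sum.distrib algebra_simps)
    finally show "(\<Sum>Y\<in>insert {} ?AB. real (card X) + real (card Y)) = real (card X) * (1 + real (card ?AB)) + (\<Sum>Y\<in>?AB. real (card Y))" .
  qed
  also have "\<dots> = (\<Sum>X\<in>?AR. real (card X)) * (1 + real (card ?AB)) + real (card ?AR) * (\<Sum>Y\<in>?AB. real (card Y))"
    by (simp add: sum.distrib sum_distrib_right)
  finally show ?thesis .
qed

end

lemma finite_E: "simple_graph V E \<Longrightarrow> finite E"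
proof -
  assume sg: "simple_graph V E"
  have "E \<subseteq> Pow V"
  proof
    fix e assume "e \<in> E"
    then obtain x y where "x \<in> V" "y \<in> V" "e = {x,y}" using sg unfolding simple_graph_def by blast
    then show "e \<in> Pow V" by auto
  qed
  moreover have "finite V" using sg by (simp add: simple_graph_def)
  ultimately show ?thesis using finite_subset by (metis finite_Pow_iff)
qed

lemma deg0_single:
  assumes "is_tree V E" "r \<in> V" "degree E r = 0"
  shows "V = {r}"
proof (rule ccontr)
  assume "V \<noteq> {r}"
  then obtain x where x: "x \<in> V" "x \<noteq> r" using assms(2) by blast
  have "(r,x) \<in> (adj_in E V)\<^sup>*" using assms(1,2) x unfolding is_tree_def induces_connected_def by blast
  then obtain z where "{r,z} \<in> E" using first_step x by metis
  then have "{e\<in>E. r\<in>e} \<noteq> {}" by blast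
  moreover have "finite E" using finite_E assms(1) unfolding is_tree_def by blast
  then have "finite {e\<in>E. r\<in>e}" by simp
  ultimately show False using assms(3) unfolding degree_def by (metis card_eq_0_iff)
qed

lemma single_sub: "subtrees_containing {r} E r = {{r}}"
  by (auto simp: subtrees_containing_def induces_connected_def)

lemma single_leaves: "leaves {r} E r = {}"
  by (auto simp: leaves_def)




definition inC where "inC V E r \<longleftrightarrow> is_tree V E \<and> r \<in> V \<and> (\<forall>u\<in>V-{r}. degree E u \<ge> 2 \<longrightarrow> degree E u \<ge> 3)"
definition NN where "NN V E r = real (card (subtrees_containing V E r))"
definition SS where "SS V E r = (\<Sum>X\<in>subtrees_containing V E r. real (card X))"
definition KK where "KK V E r = real (card (V - leaves V E r))"

definition Inv where "Inv V E r \<longleftrightarrow>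
  SS V E r \<ge> NN V E r * ((real (card V)+1)/2 + (KK V E r - 1)/10) \<and>
  4 * NN V E r + 3 \<ge> 5 * real (card V) + KK V E r \<and> NN V E r \<ge> 1 \<and>
  (degree E r \<ge> 1 \<longrightarrow> NN V E r \<ge> 2) \<and>
  (degree E r \<ge> 2 \<longrightarrow> 4 * NN V E r \<ge> 5 * real (card V) + KK V E r)"

lemma single_vals: "NN {r} E r = 1" "SS {r} E r = 1" "KK {r} E r = 1"
  by (simp_all add: NN_def SS_def KK_def single_sub single_leaves)

lemma main: "inC V E r \<Longrightarrow> Inv V E r"
proof (induction "card V" arbitrary: V E r rule: less_induct)
  case less
  from less.prems have tree: "is_tree V E" and rV: "r \<in> V" and dc: "\<forall>u\<in>V-{r}. degree E u \<ge> 2 \<longrightarrow> degree E u \<ge> 3"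
    by (auto simp: inC_def)
  show ?case
  proof (cases "degree E r = 0")
    case True
    have V1: "V = {r}" using deg0_single[OF tree rV True] .
    have "Inv {r} E r" unfolding Inv_def single_vals using True by simp
    then show ?thesis using V1 by simp
  next
    case False
    then have "{e\<in>E. r\<in>e} \<noteq> {}" unfolding degree_def by (metis card.empty)
    then obtain e where e: "e\<in>E" "r\<in>e" by blast
    have sgV: "simple_graph V E" using tree by (simp add: is_tree_def)
    obtain x y where xy: "x\<in>V" "y\<in>V" "x\<noteq>y" "e={x,y}" using sgV e(1) unfolding simple_graph_def by blast
    obtain c where rc: "{r,c} \<in> E"
    proof (cases "r = x")
      case True then show ?thesis using that e xy by blast
    next
      case False
      then have "r = y" using e xy by blast
      moreover have "{y,x} = {x,y}" by blast
      ultimately have "{r,x} \<in> E" using e xy by simp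
      then show ?thesis using that by blast
    qed
    interpret S: split V E r c using tree rV rc by unfold_locales
    have "S.R \<subset> V" using S.R_sub S.cV(1) S.cR by blast
    then have cardR: "card S.R < card V" using S.finV psubset_card_mono by blast
    have "S.B \<subset> V" using S.B_sub rV by blast
    then have cardB: "card S.B < card V" using S.finV psubset_card_mono by blast
    have inCR: "inC S.R S.ER r" unfolding inC_def
      using S.treeR S.rR S.degR dc S.R_sub by auto
    have inCB: "inC S.B S.EB c" unfolding inC_def
      using S.treeB S.cB S.degB dc S.B_sub by auto
    have IR: "Inv S.R S.ER r" using less.hyps[OF cardR inCR] .
    have IB: "Inv S.B S.EB c" using less.hyps[OF cardB inCB] .
    define NR where "NR = NN S.R S.ER r"
    define SR where "SR = SS S.R S.ER r"
    define kR where "kR = KK S.R S.ER r"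
    define nR where "nR = real (card S.R)"
    define NB where "NB = NN S.B S.EB c"
    define SB where "SB = SS S.B S.EB c"
    define kB where "kB = KK S.B S.EB c"
    define nB where "nB = real (card S.B)"
    have N: "NN V E r = NR * (1 + NB)" unfolding NN_def NR_def NB_def S.countN by (simp add: algebra_simps)
    have Sm: "SS V E r = SR * (1 + NB) + NR * SB" unfolding SS_def SR_def NR_def NB_def SB_def NN_def S.countS ..
    have n: "real (card V) = nR + nB" unfolding nR_def nB_def using S.cardRB by simp
    have dr: "degree E r = Suc (degree S.ER r)" using S.degR_r .
    have IR': "SR \<ge> NR * ((nR+1)/2 + (kR - 1)/10)" "4 * NR + 3 \<ge> 5 * nR + kR" "NR \<ge> 1"
      "degree S.ER r \<ge> 1 \<longrightarrow> NR \<ge> 2" "degree S.ER r \<ge> 2 \<longrightarrow> 4 * NR \<ge> 5 * nR + kR"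
      using IR unfolding Inv_def NR_def SR_def kR_def nR_def by auto
    have IB': "SB \<ge> NB * ((nB+1)/2 + (kB - 1)/10)" "4 * NB + 3 \<ge> 5 * nB + kB" "NB \<ge> 1"
      "degree S.EB c \<ge> 1 \<longrightarrow> NB \<ge> 2" "degree S.EB c \<ge> 2 \<longrightarrow> 4 * NB \<ge> 5 * nB + kB"
      using IB unfolding Inv_def NB_def SB_def kB_def nB_def by auto
    have Rcase: "degree S.ER r = 0 \<Longrightarrow> NR = 1 \<and> SR = 1 \<and> kR = 1 \<and> nR = 1"
    proof -
      assume "degree S.ER r = 0"
      then have "S.R = {r}" using deg0_single[OF S.treeR S.rR] by blast
      then show ?thesis using single_vals[of r S.ER] unfolding NR_def SR_def kR_def nR_def by simp
    qed
    show ?thesis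
    proof (cases "degree S.EB c = 0")
      case True
      have B1: "S.B = {c}" using deg0_single[OF S.treeB S.cB True] .
      have vals: "NB = 1" "SB = 1" "nB = 1" unfolding NB_def SB_def nB_def B1 single_vals by simp_all
      have "V - leaves V E r = S.R - leaves S.R S.ER r" using S.nonleaf_eq1[OF True] B1 by auto
      then have k: "KK V E r = kR" unfolding KK_def kR_def by simp
      have A: "SS V E r \<ge> NN V E r * ((real (card V)+1)/2 + (KK V E r - 1)/10)"
      proof -
        have "NR * (1 + 1) * ((nR + 1 + 1) / 2 + (kR - 1) / 10) = 2 * (NR * ((nR + 1) / 2 + (kR - 1) / 10)) + NR"
          by (simp add: field_simps)
        then show ?thesis unfolding Sm N n k vals using IR'(1) by simp
      qed
      show ?thesis
      proof (cases "degree S.ER r = 0")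
        case True
        then have "NR = 1" "SR = 1" "kR = 1" "nR = 1" using Rcase by auto
        then show ?thesis unfolding Inv_def using A unfolding N n k vals dr using True by simp
      next
        case False
        then have "NR \<ge> 2" using IR' by simp
        then show ?thesis unfolding Inv_def using A IR' unfolding N n k vals dr by auto
      qed
    next
      case False
      have "degree E c \<ge> 2" using S.degB_c False by simp
      then have "degree E c \<ge> 3" using dc S.cV by auto
      then have dB2: "degree S.EB c \<ge> 2" using S.degB_c by simp
      then have IB2: "4 * NB \<ge> 5 * nB + kB" "NB \<ge> 2" using IB' by auto
      have "V - leaves V E r = (S.R - leaves S.R S.ER r) \<union> (S.B - leaves S.B S.EB c)" using S.nonleaf_eq2[OF False] .
      moreover have "(S.R - leaves S.R S.ER r) \<inter> (S.B - leaves S.B S.EB c) = {}" using S.RB_disj by blast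
      ultimately have k: "KK V E r = kR + kB" unfolding KK_def kR_def kB_def
        using S.finR S.finB by (simp add: card_Un_disjoint)
      have e1: "NB * ((nB+1)/2 + (kB-1)/10) = NB*nB/2 + NB*kB/10 + 2*NB/5" by (simp add: field_simps)
      have e2: "(1+NB)*(nB/2+kB/10) = NB*nB/2 + NB*kB/10 + nB/2 + kB/10" by (simp add: field_simps)
      have e3: "2*NB/5 \<ge> nB/2 + kB/10" using IB2(1) by simp
      have "(1 + NB) * (nB/2 + kB/10) = NB*nB/2 + NB*kB/10 + (nB/2 + kB/10)" using e2 by simp
      also have "\<dots> \<le> NB*nB/2 + NB*kB/10 + 2*NB/5" using e3 by (rule add_left_mono)
      also have "\<dots> = NB * ((nB+1)/2 + (kB-1)/10)" using e1 by simp
      also have "\<dots> \<le> SB" using IB'(1) .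
      finally have Y: "SB \<ge> (1 + NB) * (nB/2 + kB/10)" .
      have Y1: "SR * (1 + NB) \<ge> NR * ((nR+1)/2 + (kR - 1)/10) * (1 + NB)"
        using IR'(1) IB'(3) by (intro mult_right_mono) auto
      have Y2: "NR * SB \<ge> NR * ((1 + NB) * (nB/2 + kB/10))"
        using Y IR'(3) by (intro mult_left_mono) auto
      have A: "SS V E r \<ge> NN V E r * ((real (card V)+1)/2 + (KK V E r - 1)/10)"
      proof -
        have "NN V E r * ((real (card V)+1)/2 + (KK V E r - 1)/10) =
              NR * ((nR+1)/2 + (kR - 1)/10) * (1 + NB) + NR * ((1 + NB) * (nB/2 + kB/10))"
          unfolding N n k by (simp add: field_simps)
        then show ?thesis unfolding Sm using Y1 Y2 by linarith
      qed
      have N2: "NN V E r \<ge> 2"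
      proof -
        have "NR * (1 + NB) \<ge> 1 * 2" using IR'(3) IB2(2) by (intro mult_mono) auto
        then show ?thesis unfolding N by simp
      qed
      show ?thesis
      proof (cases "degree S.ER r = 0")
        case True
        then have "NR = 1" "SR = 1" "kR = 1" "nR = 1" using Rcase by auto
        then show ?thesis unfolding Inv_def using A N2 IB2 unfolding N n k dr using True by simp
      next
        case False
        then have NR2: "NR \<ge> 2" using IR' by simp
        have "NB * (NR - 1) \<ge> 1 * 1" using NR2 IB'(3) by (intro mult_mono) auto
        then have D: "4 * NN V E r \<ge> 5 * real (card V) + KK V E r"
          unfolding N n k using IR'(2) IB2(1) by (simp add: algebra_simps)
        then show ?thesis unfolding Inv_def using A N2 by simp
      qed
    qed
  qed
qed


lemma T3_inC: "in_T3star V E v \<Longrightarrow> inC V E v"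
  unfolding in_T3star_def inC_def by auto

theorem mainTheorem12:
  fixes V :: "'a set" and E :: "'a set set" and v :: 'a and n k :: nat
  assumes "in_T3star V E v"
    and "n = card V"
    and "k = card (V - leaves V E v)"
  shows "local_mean V E v \<ge> (real n + 1) / 2 + (real k - 1) / 10"
proof -
  have I: "Inv V E v" using main[OF T3_inC[OF assms(1)]] .
  then have S: "SS V E v \<ge> NN V E v * ((real (card V)+1)/2 + (KK V E v - 1)/10)" and N: "NN V E v \<ge> 1"
    unfolding Inv_def by auto
  have "local_mean V E v = SS V E v / NN V E v" unfolding local_mean_def SS_def NN_def ..
  moreover have "(real (card V)+1)/2 + (KK V E v - 1)/10 \<le> SS V E v / NN V E v"
    using S N by (simp add: pos_le_divide_eq mult.commute)
  ultimately show ?thesis using assms(2,3) unfolding KK_def by simp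
qed

end
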